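(* Let $(\mathcal V,\mathcal W,\lambda)$ be a FTvN system, let $E$ be a spectral set in $\mathcal V$, $d\in\mathcal V$ and $\alpha\in\mathbb R$. Then the following are equivalent: (i) $\alpha\ge\langle d,z\rangle$ for all $z\in E$; (ii) $\alpha\ge\langle d,z\rangle$ for all $z\in\overline{\operatorname{conv}(E)}$; (iii) $\alpha\ge\langle\lambda(d),\lambda(z)\rangle$ for all $z\in E$; (iv) $\alpha\ge\langle\lambda(d),\lambda(z)\rangle$ for all $z\in\overline{\operatorname{conv}(E)}$.
   Context: A Fan-Theobald-von Neumann (FTvN) system is a triple $(\mathcal V,\mathcal W,\lambda)$ where $\mathcal V,\mathcal W$ are real inner product spaces and $\lambda:\mathcal V\to\mathcal W$ is a map such that: (A1) $\|\lambda(x)\|=\|x\|$ for all $x\in\mathcal V$; (A2) $\langle x,y\rangle\le\langle\lambda(x),\lambda(y)\rangle$ for all $x,y\in\mathcal V$; (A3) for every $c\in\mathcal V$ and $q\in\lambda(\mathcal V)$ there exists $x\in\mathcal V$ with $\lambda(x)=q$ and $\langle c,x\rangle=\langle\lambda(c),\lambda(x)\rangle$. The $\lambda$-orbit of $u$ is $[u]=\{x\in\mathcal V:\lambda(x)=\lambda(u)\}$. A set $E\subseteq\mathcal V$ is spectral if $E=\lambda^{-1}(Q)$ for some $Q\subseteq\mathcal W$, equivalently $x\in E\Rightarrow[x]\subseteq E$. $\overline{S}$ denotes closure and $\operatorname{conv}$ convex hull. *)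

theory Defs
  imports "HOL-Analysis.Analysis"
begin

definition FTvN :: "('v::real_inner \<Rightarrow> 'w::real_inner) \<Rightarrow> bool" where
  "FTvN lam \<longleftrightarrow>
     (\<forall>x. norm (lam x) = norm x) \<and>
     (\<forall>x y. inner x y \<le> inner (lam x) (lam y)) \<and>
     (\<forall>c q. q \<in> range lam \<longrightarrow> (\<exists>x. lam x = q \<and> inner c x = inner (lam c) (lam x)))"

definition spectral_set :: "('v \<Rightarrow> 'w) \<Rightarrow> 'v set \<Rightarrow> bool" where
  "spectral_set lam E \<longleftrightarrow> (\<exists>Q. E = lam -` Q)"

end

theory Submission
  imports Defs
begin

lemma halfsp:
  fixes E :: "'v::real_inner set"
  assumes "\<forall>z\<in>E. inner y z \<le> a" "z \<in> closure (convex hull E)"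
  shows "inner y z \<le> a"
proof -
  have "convex hull E \<subseteq> {x. inner y x \<le> a}"
    by (rule hull_minimal) (use assms(1) convex_halfspace_le in auto)
  then have "closure (convex hull E) \<subseteq> {x. inner y x \<le> a}"
    by (rule closure_minimal) (rule closed_halfspace_le)
  then show ?thesis using assms(2) by auto
qed

theorem theorem5p3:
  fixes lam :: "'v::real_inner \<Rightarrow> 'w::real_inner"
    and E :: "'v set" and d :: 'v and \<alpha> :: real
  assumes "FTvN lam"
    and "spectral_set lam E"
  shows "((\<forall>z\<in>E. inner d z \<le> \<alpha>) \<longleftrightarrow> (\<forall>z\<in>closure (convex hull E). inner d z \<le> \<alpha>))
       \<and> ((\<forall>z\<in>E. inner d z \<le> \<alpha>) \<longleftrightarrow> (\<forall>z\<in>E. inner (lam d) (lam z) \<le> \<alpha>))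
       \<and> ((\<forall>z\<in>E. inner d z \<le> \<alpha>) \<longleftrightarrow> (\<forall>z\<in>closure (convex hull E). inner (lam d) (lam z) \<le> \<alpha>))"
proof -
  have A2: "\<And>x y. inner x y \<le> inner (lam x) (lam y)" using assms(1) unfolding FTvN_def by blast
  have A3: "\<And>c q. q \<in> range lam \<Longrightarrow> \<exists>x. lam x = q \<and> inner c x = inner (lam c) (lam x)"
    using assms(1) unfolding FTvN_def by blast
  obtain Q where Q: "E = lam -` Q" using assms(2) unfolding spectral_set_def by metis
  have sub: "E \<subseteq> closure (convex hull E)"
    using hull_subset[of E convex] closure_subset[of "convex hull E"] by (rule subset_trans)
  have i_ii: "(\<forall>z\<in>E. inner d z \<le> \<alpha>) \<longleftrightarrow> (\<forall>z\<in>closure (convex hull E). inner d z \<le> \<alpha>)"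
  proof
    assume "\<forall>z\<in>E. inner d z \<le> \<alpha>"
    then show "\<forall>z\<in>closure (convex hull E). inner d z \<le> \<alpha>" using halfsp[of E d \<alpha>] by simp
  next
    assume "\<forall>z\<in>closure (convex hull E). inner d z \<le> \<alpha>"
    then show "\<forall>z\<in>E. inner d z \<le> \<alpha>" using sub by (simp add: subset_iff)
  qed
  have i_iii: "(\<forall>z\<in>E. inner d z \<le> \<alpha>) \<longleftrightarrow> (\<forall>z\<in>E. inner (lam d) (lam z) \<le> \<alpha>)"
  proof
    assume H: "\<forall>z\<in>E. inner d z \<le> \<alpha>"
    show "\<forall>z\<in>E. inner (lam d) (lam z) \<le> \<alpha>"
    proof
      fix z assume z: "z \<in> E"
      obtain x where x: "lam x = lam z" "inner d x = inner (lam d) (lam x)"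
        using A3[of "lam z" d] by blast
      have "x \<in> E" using x(1) z Q by auto
      then have "inner d x \<le> \<alpha>" using H by blast
      then show "inner (lam d) (lam z) \<le> \<alpha>" using x by simp
    qed
  next
    assume "\<forall>z\<in>E. inner (lam d) (lam z) \<le> \<alpha>"
    then show "\<forall>z\<in>E. inner d z \<le> \<alpha>" using A2 by (meson order_trans)
  qed
  have i_iv: "(\<forall>z\<in>E. inner d z \<le> \<alpha>) \<longleftrightarrow> (\<forall>z\<in>closure (convex hull E). inner (lam d) (lam z) \<le> \<alpha>)"
  proof
    assume H: "\<forall>z\<in>E. inner d z \<le> \<alpha>"
    then have H3: "\<forall>z\<in>E. inner (lam d) (lam z) \<le> \<alpha>" using i_iii by blast
    show "\<forall>z\<in>closure (convex hull E). inner (lam d) (lam z) \<le> \<alpha>"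
    proof
      fix z assume z: "z \<in> closure (convex hull E)"
      obtain y where y: "lam y = lam d" "inner z y = inner (lam z) (lam y)"
        using A3[of "lam d" z] by blast
      have "\<forall>e\<in>E. inner y e \<le> \<alpha>"
      proof
        fix e assume "e \<in> E"
        then show "inner y e \<le> \<alpha>" using A2[of y e] H3 y(1) by fastforce
      qed
      then have "inner y z \<le> \<alpha>" using halfsp[of E y \<alpha> z] z by blast
      then show "inner (lam d) (lam z) \<le> \<alpha>" using y by (simp add: inner_commute)
    qed
  next
    assume "\<forall>z\<in>closure (convex hull E). inner (lam d) (lam z) \<le> \<alpha>"
    then have "\<forall>z\<in>E. inner (lam d) (lam z) \<le> \<alpha>" using sub by (simp add: subset_iff)
    then show "\<forall>z\<in>E. inner d z \<le> \<alpha>" using i_iii by simp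
  qed
  show ?thesis using i_ii i_iii i_iv by simp
qed

end
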